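(* Let $\mu$ be a stationary ergodic, elliptic and non-degenerate probability measure on $\Omega$ with $\mathbb P^1(S_+)>0$. Let $\epsilon>0$ and let $y\in\mathbb Z_+$ satisfy $\mathbb P^y(S_+)>1-\epsilon$. Then there exist integers $n_1<n_2<\cdots$ such that $\mathbb P^1(Z^-_{n_i}>y)<3\epsilon$ for all $i\ge1$.
   Context: Notation: $\mathbb N=\{1,2,\dots\}$, $\mathbb Z_+=\{0,1,2,\dots\}$. Cookie environments $\omega\in\Omega=[0,1]^{\mathbb Z\times\mathbb N}$; shift $(\theta\omega)(x,n)=\omega(x+1,n)$; $\mu$ stationary ergodic means $\theta$-invariant and ergodic; elliptic means $\mu((0,1)^{\mathbb Z\times\mathbb N})=1$. Random arrow environment: $a(x,n)=\mathbf 1_{\{u(x,n)<\omega(x,n)\}}$ with $u(x,n)$ i.i.d. Uniform$[0,1]$ independent of $\omega\sim\mu$; $\mathbb P$ denotes the joint law of $(\omega,u)$. A sequence $b\in\{0,1\}^{\mathbb N}$ is non-degenerate if $b(i)\ne b(i+1)$ for infinitely many $i$; $\mu$ is non-degenerate if $\mathbb P$-a.s. every $a(x,\cdot)$ is non-degenerate. For non-degenerate $b$: $U^+_b(0)=0$ and for $x\ge1$, $U^+_b(x)$ is the number of indices $i$ with $b(i)=1$ preceding the $x$-th index $j$ with $b(j)=0$; $U^-_b$ is defined the same way with $0$ and $1$ exchanged. For $y\in\mathbb Z_+$: $Z^+_0=y$, $Z^+_n=U^+_{a(n-1,\cdot)}(Z^+_{n-1})$; $Z^-_0=y$, $Z^-_n=U^-_{a(1-n,\cdot)}(Z^-_{n-1})$.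 $\mathbb P^y$ denotes $\mathbb P$ applied to events about $Z^\pm$ with initial value $y$. $S_+=\{Z^+_n>0\ \forall n\ge0\}$. *)

theory Defs
  imports "HOL-Probability.Probability" "HOL-Library.Infinite_Set"
begin

definition Idx :: "(int \<times> nat) set" where
  "Idx = UNIV \<times> {1..}"

definition OmegaM :: "(int \<times> nat \<Rightarrow> real) measure" where
  "OmegaM = PiM Idx (\<lambda>_. restrict_space borel {0..1::real})"

definition UnifM :: "(int \<times> nat \<Rightarrow> real) measure" where
  "UnifM = PiM Idx (\<lambda>_. uniform_measure lborel {0..1::real})"

definition shift :: "(int \<times> nat \<Rightarrow> real) \<Rightarrow> (int \<times> nat \<Rightarrow> real)" where
  "shift \<omega> = (\<lambda>(x, n). \<omega> (x + 1, n))"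

definition stationary :: "(int \<times> nat \<Rightarrow> real) measure \<Rightarrow> bool" where
  "stationary \<mu> \<longleftrightarrow> shift \<in> \<mu> \<rightarrow>\<^sub>M \<mu> \<and> distr \<mu> \<mu> shift = \<mu>"

definition ergodic :: "(int \<times> nat \<Rightarrow> real) measure \<Rightarrow> bool" where
  "ergodic \<mu> \<longleftrightarrow> (\<forall>A \<in> sets \<mu>. shift -` A \<inter> space \<mu> = A \<longrightarrow>
                     emeasure \<mu> A = 0 \<or> emeasure \<mu> A = 1)"

definition elliptic :: "(int \<times> nat \<Rightarrow> real) measure \<Rightarrow> bool" where
  "elliptic \<mu> \<longleftrightarrow> emeasure \<mu> {\<omega> \<in> space \<mu>. \<forall>i \<in> Idx. 0 < \<omega> i \<and> \<omega> i < 1} = 1"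

definition jointP :: "(int \<times> nat \<Rightarrow> real) measure \<Rightarrow> ((int \<times> nat \<Rightarrow> real) \<times> (int \<times> nat \<Rightarrow> real)) measure" where
  "jointP \<mu> = \<mu> \<Otimes>\<^sub>M UnifM"

text \<open>Arrow environment a(x,n) = 1 iff u(x,n) < \<omega>(x,n) (True encodes 1, False encodes 0).\<close>
definition arrow :: "(int \<times> nat \<Rightarrow> real) \<Rightarrow> (int \<times> nat \<Rightarrow> real) \<Rightarrow> int \<Rightarrow> nat \<Rightarrow> bool" where
  "arrow \<omega> u x n \<longleftrightarrow> u (x, n) < \<omega> (x, n)"

text \<open>A sequence b indexed by \<nat> = {1,2,...} (values at index 0 are ignored).\<close>
definition nondeg :: "(nat \<Rightarrow> bool) \<Rightarrow> bool" where
  "nondeg b \<longleftrightarrow> infinite {i. 1 \<le> i \<and> b i \<noteq> b (i + 1)}"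

definition nondegenerate :: "(int \<times> nat \<Rightarrow> real) measure \<Rightarrow> bool" where
  "nondegenerate \<mu> \<longleftrightarrow> (AE p in jointP \<mu>. \<forall>x. nondeg (arrow (fst p) (snd p) x))"

text \<open>The x-th (x \<ge> 1) index j \<ge> 1 with b j = v.\<close>
definition nth_idx :: "(nat \<Rightarrow> bool) \<Rightarrow> bool \<Rightarrow> nat \<Rightarrow> nat" where
  "nth_idx b v x = enumerate {i. 1 \<le> i \<and> b i = v} (x - 1)"

definition Uplus :: "(nat \<Rightarrow> bool) \<Rightarrow> nat \<Rightarrow> nat" where
  "Uplus b x = (if x = 0 then 0 else card {i. 1 \<le> i \<and> i < nth_idx b False x \<and> b i})"

definition Uminus :: "(nat \<Rightarrow> bool) \<Rightarrow> nat \<Rightarrow> nat" where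
  "Uminus b x = (if x = 0 then 0 else card {i. 1 \<le> i \<and> i < nth_idx b True x \<and> \<not> b i})"

primrec Zplus :: "(int \<Rightarrow> nat \<Rightarrow> bool) \<Rightarrow> nat \<Rightarrow> nat \<Rightarrow> nat" where
  "Zplus a y 0 = y"
| "Zplus a y (Suc n) = Uplus (a (int n)) (Zplus a y n)"

primrec Zminus :: "(int \<Rightarrow> nat \<Rightarrow> bool) \<Rightarrow> nat \<Rightarrow> nat \<Rightarrow> nat" where
  "Zminus a y 0 = y"
| "Zminus a y (Suc n) = Uminus (a (1 - int (Suc n))) (Zminus a y n)"

definition PSplus :: "(int \<times> nat \<Rightarrow> real) measure \<Rightarrow> nat \<Rightarrow> real" where
  "PSplus \<mu> y = measure (jointP \<mu>)
     {p \<in> space (jointP \<mu>). \<forall>n. Zplus (arrow (fst p) (snd p)) y n > 0}"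

end

theory Submission
  imports Defs
begin
lemma card_below_enum:
  fixes S :: "nat set" assumes S: "infinite S"
  shows "card {s\<in>S. s < enumerate S n} = n"
proof -
  have "{s\<in>S. s < enumerate S n} = enumerate S ` {..<n}"
  proof
    show "{s \<in> S. s < enumerate S n} \<subseteq> enumerate S ` {..<n}"
    proof
      fix s assume "s \<in> {s \<in> S. s < enumerate S n}"
      then obtain m where m: "enumerate S m = s" "s < enumerate S n" using enumerate_Ex[OF S] by blast
      then have "m < n" using S by (metis enumerate_mono_iff)
      then show "s \<in> enumerate S ` {..<n}" using m by auto
    qed
  qed (auto simp: S enumerate_in_set)
  moreover have "inj_on (enumerate S) {..<n}" using inj_enumerate[OF S] by (auto simp: inj_on_def)
  ultimately show ?thesis by (simp add: card_image)
qed

lemma card_below_ge_iff: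
  fixes S :: "nat set" assumes S: "infinite S" and j: "j \<ge> 1"
  shows "card {s\<in>S. s < t} \<ge> j \<longleftrightarrow> enumerate S (j-1) < t"
proof
  assume h: "j \<le> card {s\<in>S. s < t}"
  show "enumerate S (j-1) < t"
  proof (rule ccontr)
    assume "\<not> enumerate S (j-1) < t"
    then have "{s\<in>S. s < t} \<subseteq> {s\<in>S. s < enumerate S (j-1)}" by auto
    then have "card {s\<in>S. s < t} \<le> card {s\<in>S. s < enumerate S (j-1)}"
      by (intro card_mono) auto
    with h j show False by (simp add: card_below_enum[OF S])
  qed
next
  assume h: "enumerate S (j-1) < t"
  have "insert (enumerate S (j-1)) {s\<in>S. s < enumerate S (j-1)} \<subseteq> {s\<in>S. s < t}"
    using h S enumerate_in_set by auto
  then have "card (insert (enumerate S (j-1)) {s\<in>S. s < enumerate S (j-1)}) \<le> card {s\<in>S. s < t}"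
    by (intro card_mono) auto
  then show "j \<le> card {s\<in>S. s < t}" using j by (simp add: card_below_enum[OF S])
qed

lemma nondeg_inf:
  assumes "nondeg b" shows "infinite {i. 1 \<le> i \<and> b i = v}"
proof
  assume f: "finite {i. 1 \<le> i \<and> b i = v}"
  then obtain M where M: "\<And>i. i \<in> {i. 1 \<le> i \<and> b i = v} \<Longrightarrow> i \<le> M"
    by (meson finite_nat_set_iff_bounded_le)
  have "{i. 1 \<le> i \<and> b i \<noteq> b (i + 1)} \<subseteq> {..M}"
  proof
    fix i assume "i \<in> {i. 1 \<le> i \<and> b i \<noteq> b (i + 1)}"
    then have "1 \<le> i" "b i \<noteq> b (i+1)" by auto
    then have "b i = v \<or> b (i+1) = v" by auto
    then show "i \<in> {..M}" using M[of i] M[of "i+1"] \<open>1 \<le> i\<close> by auto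
  qed
  then show False using assms unfolding nondeg_def by (meson finite_atMost finite_subset)
qed

lemma Uminus_dual:
  assumes b: "nondeg b" and k: "k \<ge> 1"
  shows "Uminus b k > y \<longleftrightarrow> Uplus b (y+1) < k"
proof -
  let ?O = "{i. 1 \<le> i \<and> b i = True}" and ?Z = "{i. 1 \<le> i \<and> b i = False}"
  have O: "infinite ?O" and Z: "infinite ?Z" using nondeg_inf[OF b] by blast+
  define t1 where "t1 = enumerate ?O (k-1)"
  define t0 where "t0 = enumerate ?Z y"
  have t1O: "t1 \<in> ?O" using O enumerate_in_set t1_def by blast
  have t0Z: "t0 \<in> ?Z" using Z enumerate_in_set t0_def by blast
  have ne: "t0 \<noteq> t1" using t1O t0Z by auto
  have e1: "{i. 1 \<le> i \<and> i < nth_idx b True k \<and> \<not> b i} = {s\<in>?Z. s < t1}"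
    by (auto simp: nth_idx_def t1_def)
  have e2: "{i. 1 \<le> i \<and> i < nth_idx b False (y+1) \<and> b i} = {s\<in>?O. s < t0}"
    by (auto simp: nth_idx_def t0_def)
  have "Uminus b k = card {i. 1 \<le> i \<and> i < nth_idx b True k \<and> \<not> b i}"
    using k by (simp add: Uminus_def)
  then have "Uminus b k > y \<longleftrightarrow> card {s\<in>?Z. s < t1} \<ge> y + 1"
    unfolding e1 by (simp add: Suc_le_eq)
  also have "\<dots> \<longleftrightarrow> t0 < t1" using card_below_ge_iff[OF Z, of "y+1" t1] by (simp add: t0_def)
  also have "\<dots> \<longleftrightarrow> \<not> (card {s\<in>?O. s < t0} \<ge> k)"
    using card_below_ge_iff[OF O k, of t0] ne by (auto simp: t1_def)
  also have "\<dots> \<longleftrightarrow> Uplus b (y+1) < k"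
  proof -
    have "Uplus b (y+1) = card {i. 1 \<le> i \<and> i < nth_idx b False (y+1) \<and> b i}"
      by (simp add: Uplus_def)
    then show ?thesis unfolding e2 by (simp add: not_le)
  qed
  finally show ?thesis .
qed

lemma Uplus_mono:
  assumes b: "nondeg b" and "x \<le> x'"
  shows "Uplus b x \<le> Uplus b x'"
proof (cases "x = 0")
  case True then show ?thesis by (simp add: Uplus_def)
next
  case False
  let ?Z = "{i. 1 \<le> i \<and> b i = False}"
  have Z: "infinite ?Z" using nondeg_inf[OF b] by blast
  have "nth_idx b False x \<le> nth_idx b False x'"
    unfolding nth_idx_def using Z assms(2) by simp
  then have "{i. 1 \<le> i \<and> i < nth_idx b False x \<and> b i} \<subseteq> {i. 1 \<le> i \<and> i < nth_idx b False x' \<and> b i}"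
    by auto
  then have "card {i. 1 \<le> i \<and> i < nth_idx b False x \<and> b i} \<le> card {i. 1 \<le> i \<and> i < nth_idx b False x' \<and> b i}"
    by (intro card_mono) auto
  then show ?thesis using False assms(2) by (simp add: Uplus_def)
qed

lemma Zplus_mono:
  assumes "\<forall>x. nondeg (a x)" "y \<le> y'"
  shows "Zplus a y n \<le> Zplus a y' n"
  using assms by (induction n) (auto intro: Uplus_mono)

lemma Zplus_Suc_inner:
  "Zplus a y (Suc n) = Zplus (\<lambda>x. a (x+1)) (Uplus (a 0) y) n"
  by (induction n) (auto simp: add.commute)

lemma Zminus_Zplus:
  assumes a: "\<forall>x. nondeg (a x)" and k: "k \<ge> 1"
  shows "Zminus a k n > y \<Longrightarrow> Zplus (\<lambda>x. a (x + 1 - int n)) y n < k"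
proof (induction n arbitrary: y)
  case 0 then show ?case by simp
next
  case (Suc n)
  let ?m = "Zminus a k n"
  have h: "Uminus (a (- int n)) ?m > y" using Suc.prems by simp
  have m1: "?m \<ge> 1" using h by (cases "?m = 0") (auto simp: Uminus_def)
  have "Uplus (a (- int n)) (y+1) < ?m" using Uminus_dual[OF spec[OF a] m1] h by simp
  then have IH: "Zplus (\<lambda>x. a (x + 1 - int n)) (Uplus (a (- int n)) (y+1)) n < k"
    using Suc.IH by blast
  have "Zplus (\<lambda>x. a (x + 1 - int (Suc n))) y (Suc n)
      = Zplus (\<lambda>x. a (x + 1 - int n)) (Uplus (a (- int n)) y) n"
    by (subst Zplus_Suc_inner) (simp add: algebra_simps)
  also have "\<dots> \<le> Zplus (\<lambda>x. a (x + 1 - int n)) (Uplus (a (- int n)) (y+1)) n"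
    using a by (intro Zplus_mono Uplus_mono) auto
  finally show ?case using IH by simp
qed

definition shinv :: "(int \<times> nat \<Rightarrow> real) \<Rightarrow> (int \<times> nat \<Rightarrow> real)" where
  "shinv \<omega> = (\<lambda>(x, n). \<omega> (x - 1, n))"

definition Tinv where "Tinv = (\<lambda>(a, b). (shinv a, shinv b))"

lemma arrow_Tinv_pow:
  "arrow (fst ((Tinv^^m) p)) (snd ((Tinv^^m) p)) = (\<lambda>x n. arrow (fst p) (snd p) (x - int m) n)"
proof (induction m)
  case 0 then show ?case by simp
next
  case (Suc m)
  have "arrow (fst ((Tinv^^Suc m) p)) (snd ((Tinv^^Suc m) p))
     = (\<lambda>x n. arrow (fst ((Tinv^^m) p)) (snd ((Tinv^^m) p)) (x - 1) n)"
    by (auto simp: Tinv_def shinv_def arrow_def split: prod.splits intro!: ext)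
  also have "\<dots> = (\<lambda>x n. arrow (fst p) (snd p) (x - int (Suc m)) n)"
    by (simp add: Suc.IH algebra_simps)
  finally show ?case .
qed

lemma shinv_meas:
  "shinv \<in> PiM Idx (\<lambda>_. F) \<rightarrow>\<^sub>M PiM Idx (\<lambda>_. F)"
proof -
  have eq: "shinv = (\<lambda>\<omega> i. (\<lambda>i \<omega>. \<omega> (fst i - 1, snd i)) i \<omega>)"
    by (auto simp: shinv_def intro!: ext)
  show ?thesis
    unfolding eq
  proof (rule measurable_PiM_single')
    fix i :: "int \<times> nat" assume i: "i \<in> Idx"
    then have "(fst i - 1, snd i) \<in> Idx" by (auto simp: Idx_def)
    then show "(\<lambda>\<omega>. \<omega> (fst i - 1, snd i)) \<in> Pi\<^sub>M Idx (\<lambda>_. F) \<rightarrow>\<^sub>M F"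
      by (rule measurable_component_singleton)
  next
    show "(\<lambda>\<omega> i. \<omega> (fst i - 1, snd i)) \<in> space (Pi\<^sub>M Idx (\<lambda>_. F)) \<rightarrow> (\<Pi>\<^sub>E i\<in>Idx. space F)"
    proof
      fix \<omega> assume "\<omega> \<in> space (Pi\<^sub>M Idx (\<lambda>_. F))"
      then have w: "\<omega> \<in> (\<Pi>\<^sub>E i\<in>Idx. space F)" by (simp add: space_PiM)
      show "(\<lambda>i. \<omega> (fst i - 1, snd i)) \<in> (\<Pi>\<^sub>E i\<in>Idx. space F)"
        using w by (auto simp: PiE_iff Idx_def extensional_def)
    qed
  qed
qed

lemma distr_shinv_PiM:
  assumes "prob_space F"
  shows "distr (PiM Idx (\<lambda>_. F)) (PiM Idx (\<lambda>_. F)) shinv = PiM Idx (\<lambda>_. F)"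
proof -
  let ?f = "\<lambda>i::int\<times>nat. (fst i - 1, snd i)"
  have inj: "inj_on ?f Idx" by (auto simp: inj_on_def)
  have fi: "?f \<in> Idx \<rightarrow> Idx" by (auto simp: Idx_def)
  have "distr (PiM Idx (\<lambda>_. F)) (PiM Idx (\<lambda>i. (\<lambda>_. F) (?f i))) (\<lambda>\<omega>. \<lambda>n\<in>Idx. \<omega> (?f n))
        = PiM Idx (\<lambda>i. (\<lambda>_. F) (?f i))"
    by (rule distr_PiM_reindex[OF _ inj fi]) (rule assms)
  then have r: "distr (PiM Idx (\<lambda>_. F)) (PiM Idx (\<lambda>_. F)) (\<lambda>\<omega>. \<lambda>n\<in>Idx. \<omega> (?f n)) = PiM Idx (\<lambda>_. F)"
    by simp
  have "distr (PiM Idx (\<lambda>_. F)) (PiM Idx (\<lambda>_. F)) shinv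
      = distr (PiM Idx (\<lambda>_. F)) (PiM Idx (\<lambda>_. F)) (\<lambda>\<omega>. \<lambda>n\<in>Idx. \<omega> (?f n))"
  proof (rule distr_cong)
    fix \<omega> assume "\<omega> \<in> space (PiM Idx (\<lambda>_. F))"
    then have w: "\<omega> \<in> (\<Pi>\<^sub>E i\<in>Idx. space F)" by (simp add: space_PiM)
    show "shinv \<omega> = (\<lambda>n\<in>Idx. \<omega> (?f n))"
      using w by (auto simp: shinv_def PiE_iff Idx_def extensional_def intro!: ext)
  qed auto
  with r show ?thesis by simp
qed

lemma iter_preserving:
  assumes T: "T \<in> M \<rightarrow>\<^sub>M M" and D: "distr M M T = M"
  shows "(T^^m) \<in> M \<rightarrow>\<^sub>M M \<and> distr M M (T^^m) = M"
proof (induction m)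
  case 0 then show ?case by (simp add: distr_id[unfolded id_def])
next
  case (Suc m)
  then have m: "(T^^m) \<in> M \<rightarrow>\<^sub>M M" and dm: "distr M M (T^^m) = M" by auto
  have "(T^^Suc m) = (T^^m) \<circ> T" by (rule funpow_Suc_right)
  moreover have "((T^^m) \<circ> T) \<in> M \<rightarrow>\<^sub>M M" using m T by (rule measurable_comp[OF T m, simplified] | simp add: measurable_comp)
  moreover have "distr M M ((T^^m) \<circ> T) = M"
    using distr_distr[OF m T] D dm by simp
  ultimately show ?case by (simp add: comp_def)
qed

theorem lemma4p7:
  fixes \<mu> :: "(int \<times> nat \<Rightarrow> real) measure" and \<epsilon> :: real and y :: nat
  assumes "prob_space \<mu>" and "sets \<mu> = sets OmegaM"
    and "stationary \<mu>" and "ergodic \<mu>" and "elliptic \<mu>" and "nondegenerate \<mu>"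
    and "PSplus \<mu> 1 > 0"
    and "\<epsilon> > 0" and "PSplus \<mu> y > 1 - \<epsilon>"
  shows "\<exists>n :: nat \<Rightarrow> nat. strict_mono n \<and>
           (\<forall>i. measure (jointP \<mu>)
                  {p \<in> space (jointP \<mu>). Zminus (arrow (fst p) (snd p)) 1 (n i) > y} < 3 * \<epsilon>)"
proof -
  define J where "J = jointP \<mu>"
  define U where "U = UnifM"
  have shmu: "shift \<in> \<mu> \<rightarrow>\<^sub>M \<mu>" and dshmu: "distr \<mu> \<mu> shift = \<mu>"
    using assms(3) by (auto simp: stationary_def)
  have shinv_mu: "shinv \<in> \<mu> \<rightarrow>\<^sub>M \<mu>"
    using shinv_meas[of "restrict_space borel {0..1::real}"]
    by (simp add: measurable_cong_sets[OF assms(2) assms(2)] OmegaM_def)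
  have comp: "shinv \<circ> shift = (\<lambda>x. x)"
    by (auto simp: shinv_def shift_def intro!: ext)
  have dmu: "distr \<mu> \<mu> shinv = \<mu>"
  proof -
    have "distr \<mu> \<mu> shinv = distr (distr \<mu> \<mu> shift) \<mu> shinv" by (simp add: dshmu)
    also have "\<dots> = distr \<mu> \<mu> (shinv \<circ> shift)" by (rule distr_distr[OF shinv_mu shmu])
    also have "\<dots> = \<mu>" by (simp add: comp distr_id[unfolded id_def])
    finally show ?thesis .
  qed
  have pu: "prob_space (uniform_measure lborel {0..1::real})"
    by (rule prob_space_uniform_measure) auto
  have pU: "prob_space U" unfolding U_def UnifM_def
    by (rule prob_space_PiM) (rule pu)
  have shinv_U: "shinv \<in> U \<rightarrow>\<^sub>M U" unfolding U_def UnifM_def by (rule shinv_meas)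
  have dU: "distr U U shinv = U" unfolding U_def UnifM_def by (rule distr_shinv_PiM[OF pu])
  have pJ: "prob_space J" unfolding J_def jointP_def using prob_space_pair[OF assms(1) pU] by (simp add: U_def)
  then interpret J: prob_space J .
  have TJ: "Tinv \<in> J \<rightarrow>\<^sub>M J"
    unfolding J_def jointP_def Tinv_def U_def[symmetric]
    using shinv_mu shinv_U by (auto intro!: measurable_Pair measurable_compose[OF measurable_fst] measurable_compose[OF measurable_snd] simp: case_prod_beta')
  have dJ: "distr J J Tinv = J"
  proof -
    have sf: "sigma_finite_measure (distr U U shinv)" using dU pU
      by (simp add: prob_space_imp_sigma_finite)
    have "distr \<mu> \<mu> shinv \<Otimes>\<^sub>M distr U U shinv = distr (\<mu> \<Otimes>\<^sub>M U) (\<mu> \<Otimes>\<^sub>M U) (\<lambda>(x, y). (shinv x, shinv y))"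
      by (rule pair_measure_distr[OF shinv_mu shinv_U sf])
    then show ?thesis using dmu dU by (simp add: J_def jointP_def U_def Tinv_def)
  qed
  have iter: "\<And>m. (Tinv^^m) \<in> J \<rightarrow>\<^sub>M J \<and> distr J J (Tinv^^m) = J"
    by (rule iter_preserving[OF TJ dJ])
  show ?thesis
  proof (cases "3 * \<epsilon> > 1")
    case True
    show ?thesis
      by (rule exI[of _ id]) (use True in \<open>auto simp: strict_mono_def J_def[symmetric] intro: le_less_trans[OF J.prob_le_1]\<close>)
  next
    case False
    define S where "S = {p \<in> space J. \<forall>n. Zplus (arrow (fst p) (snd p)) y n > 0}"
    have mS: "measure J S > 1 - \<epsilon>" using assms(9) by (simp add: PSplus_def S_def J_def)
    then have "measure J S \<noteq> 0" using False by auto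
    then have Ssets: "S \<in> sets J" using measure_notin_sets by blast
    define C where "C = space J - S"
    have Csets: "C \<in> sets J" using Ssets by (simp add: C_def)
    have mC: "measure J C < \<epsilon>" using J.prob_compl[OF Ssets] mS by (simp add: C_def)
    obtain N where N: "{p \<in> space J. \<not> (\<forall>x. nondeg (arrow (fst p) (snd p) x))} \<subseteq> N"
      "emeasure J N = 0" "N \<in> sets J"
      using assms(6) unfolding nondegenerate_def J_def[symmetric] by (rule AE_E)
    have mN: "measure J N = 0" using N by (simp add: measure_def)
    have bound: "measure J {p \<in> space J. Zminus (arrow (fst p) (snd p)) 1 n > y} < 3 * \<epsilon>" for n
    proof -
      define A where "A = {p \<in> space J. Zminus (arrow (fst p) (snd p)) 1 n > y}"
      define P where "P = (Tinv^^(n-1)) -` C \<inter> space J"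
      have Psets: "P \<in> sets J" unfolding P_def using iter Csets by (auto intro: measurable_sets)
      have mP: "measure J P = measure J C"
        using measure_distr[of "Tinv^^(n-1)" J J C] iter Csets by (simp add: P_def)
      have sub: "A \<subseteq> P \<union> N"
      proof
        fix p assume pA: "p \<in> A"
        show "p \<in> P \<union> N"
        proof (cases "p \<in> N")
          case False
          with pA N(1) have p: "p \<in> space J" and nd: "\<forall>x. nondeg (arrow (fst p) (snd p) x)"
            and z: "Zminus (arrow (fst p) (snd p)) 1 n > y" by (auto simp: A_def)
          define q where "q = (Tinv^^(n-1)) p"
          have qsp: "q \<in> space J" using iter p unfolding q_def by (meson measurable_space)
          have "Zplus (arrow (fst q) (snd q)) y n = 0"
          proof (cases "n = 0")
            case True then show ?thesis using z by simp
          next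
            case False
            have "Zplus (\<lambda>x. arrow (fst p) (snd p) (x + 1 - int n)) y n < 1"
              using Zminus_Zplus[OF nd, where k=1 and n=n and y=y] z by simp
            moreover have "arrow (fst q) (snd q) = (\<lambda>x. arrow (fst p) (snd p) (x + 1 - int n))"
              unfolding q_def arrow_Tinv_pow using False by (auto intro!: ext simp: of_nat_diff algebra_simps)
            ultimately show ?thesis by simp
          qed
          then have "q \<notin> S" by (auto simp: S_def dest: spec[of _ n])
          then have "p \<in> P" using qsp p by (simp add: P_def C_def q_def)
          then show ?thesis by simp
        qed simp
      qed
      show ?thesis
      proof (cases "A \<in> sets J")
        case True
        have "measure J A \<le> measure J (P \<union> N)"
          using sub Psets N(3) by (intro J.finite_measure_mono) auto
        also have "\<dots> \<le> measure J P + measure J N"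
          using Psets N(3) by (simp add: measure_Un_le)
        also have "\<dots> < \<epsilon>" using mP mC mN by simp
        finally show ?thesis using assms(8) unfolding A_def by simp
      next
        case False
        then show ?thesis using assms(8) by (simp add: measure_notin_sets A_def)
      qed
    qed
    show ?thesis
      by (rule exI[of _ id]) (use bound in \<open>auto simp: strict_mono_def J_def[symmetric]\<close>)
  qed
qed

end
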